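(* Let $G=\{G_t,t\geq 0\}$ be a centered Gaussian process such that $G_0=0$ and there exist constants $c>0$ and $\gamma\in(0,1)$ with $E[(G_t-G_s)^2]\leq c|t-s|^{2\gamma}$ for all $s,t\geq 0$. Let $\theta>0$, $\mu\in\mathbb{R}$, let $X$ be the solution of $X_0=0$, $dX_t=\theta(\mu+X_t)dt+dG_t$, and let $\zeta_\infty=\theta\int_0^\infty e^{-\theta s}G_s\,ds$. Then almost surely, as $T\to\infty$: (i) $e^{-\theta T}X_T\to \mu+\zeta_\infty$; (ii) $e^{-\theta T}\int_0^T X_s\,ds\to \frac{1}{\theta}(\mu+\zeta_\infty)$; (iii) $\frac{e^{-\theta T}}{T}\int_0^T sX_s\,ds\to \frac{1}{\theta}(\mu+\zeta_\infty)$; (iv) for any $\delta>0$, $\frac{e^{-\theta T}}{T^{\delta}}\int_0^T|X_s|\,ds\to 0$; (v) $e^{-2\theta T}\int_0^T X_s^2\,ds\to \frac{1}{2\theta}(\mu+\zeta_\infty)^2$.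
   Context: $G$ is taken in a modification with locally $(\gamma-\varepsilon)$-Hölder continuous paths for every $\varepsilon\in(0,\gamma)$. The process $X$ is the unique pathwise solution of the equation, i.e. $X_t=\mu\theta t+\theta\int_0^t X_s\,ds+G_t$; explicitly $X_t=\mu(e^{\theta t}-1)+e^{\theta t}\int_0^t e^{-\theta s}dG_s$ with a Young integral. The integral defining $\zeta_\infty$ converges almost surely. *)

theory Defs
  imports "HOL-Probability.Probability"
begin

definition gaussian_rv :: "'a measure \<Rightarrow> ('a \<Rightarrow> real) \<Rightarrow> bool" where
  "gaussian_rv M Y \<longleftrightarrow>
     (\<exists>m \<sigma>. \<sigma> > 0 \<and> distributed M lborel Y (normal_density m \<sigma>)) \<or>
     (\<exists>c. AE \<omega> in M. Y \<omega> = c)"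

definition gaussian_process :: "'a measure \<Rightarrow> (real \<Rightarrow> 'a \<Rightarrow> real) \<Rightarrow> bool" where
  "gaussian_process M G \<longleftrightarrow>
     (\<forall>t\<ge>0. G t \<in> borel_measurable M) \<and>
     (\<forall>(n::nat) (ts::nat \<Rightarrow> real) (a::nat \<Rightarrow> real). (\<forall>i<n. ts i \<ge> 0) \<longrightarrow>
        gaussian_rv M (\<lambda>\<omega>. \<Sum>i<n. a i * G (ts i) \<omega>))"

definition centered_process :: "'a measure \<Rightarrow> (real \<Rightarrow> 'a \<Rightarrow> real) \<Rightarrow> bool" where
  "centered_process M G \<longleftrightarrow> (\<forall>t\<ge>0. integrable M (G t) \<and> integral\<^sup>L M (G t) = 0)"

definition zeta_inf :: "real \<Rightarrow> (real \<Rightarrow> 'a \<Rightarrow> real) \<Rightarrow> 'a \<Rightarrow> real" where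
  "zeta_inf \<theta> G \<omega> = \<theta> * (LBINT s:{0..}. exp (- \<theta> * s) * G s \<omega>)"

end

theory Submission
  imports Defs "HOL-Real_Asymp.Real_Asymp"
begin


lemma exp_set_integrable:
  assumes "a > (0::real)"
  shows "set_integrable lborel {0..} (\<lambda>s::real. exp (- a * s))"
proof -
  have "(\<lambda>s::real. exp (- a * s)) absolutely_integrable_on {0..}"
    by (rule nonnegative_absolutely_integrable_1[OF integrable_on_exp_minus_to_infinity[OF assms]]) auto
  then have "integrable (completion lborel) (\<lambda>s::real. indicator {0..} s *\<^sub>R exp (- a * s))"
    unfolding set_integrable_def .
  then show ?thesis unfolding set_integrable_def
    by (subst (asm) integrable_completion) auto
qed

lemma deriv_int:
  fixes h :: "real \<Rightarrow> real"
  assumes "continuous_on {0..} h" "T > 0"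
  shows "((\<lambda>x. integral {0..x} h) has_real_derivative h T) (at T)"
proof -
  have "continuous_on {0..T+1} h" using assms(1) by (rule continuous_on_subset) auto
  from integral_has_real_derivative[OF this, of T] assms(2)
  have d: "((\<lambda>x. integral {0..x} h) has_real_derivative h T) (at T within {0..T+1})" by simp
  have "at T within {0..T+1} = at T" by (rule at_within_interior) (use assms(2) in simp)
  with d show ?thesis by simp
qed

lemma lim1: "(\<theta>::real) > 0 \<Longrightarrow> ((\<lambda>T. 1/\<theta>^2 - (T/\<theta> + 1/\<theta>^2) * exp (-\<theta>*T)) \<longlongrightarrow> 1/\<theta>^2) at_top"
  by real_asymp
lemma lim2: "(\<theta>::real) > 0 \<Longrightarrow> ((\<lambda>T. T * exp (-\<theta>*T)) \<longlongrightarrow> 0) at_top"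
  by real_asymp
lemma lim3: "(\<theta>::real) > 0 \<Longrightarrow> ((\<lambda>T. T / (1 + \<theta> * T)) \<longlongrightarrow> 1/\<theta>) at_top"
  by real_asymp (simp add: field_simps)
lemma lim4: "(\<theta>::real) > 0 \<Longrightarrow> \<delta> > 0 \<Longrightarrow> filterlim (\<lambda>T. \<delta> * T powr (\<delta> - 1) + \<theta> * T powr \<delta>) at_top at_top"
  by real_asymp
lemma lim5: "(\<theta>::real) > 0 \<Longrightarrow> filterlim (\<lambda>T. exp (\<theta> * T)) at_top at_top"
  by real_asymp
lemma lim6: "(\<theta>::real) > 0 \<Longrightarrow> filterlim (\<lambda>T. T * exp (\<theta> * T)) at_top at_top"
  by real_asymp
lemma lim7: "(\<theta>::real) > 0 \<Longrightarrow> \<delta> > 0 \<Longrightarrow> filterlim (\<lambda>T. T powr \<delta> * exp (\<theta> * T)) at_top at_top"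
  by real_asymp
lemma lim8: "(\<theta>::real) > 0 \<Longrightarrow> ((\<lambda>T. w * exp (-(\<theta>/2)*T)) \<longlongrightarrow> 0) at_top"
  by real_asymp

lemma tl_ev:
  assumes "(f \<longlongrightarrow> l) F" "l = l'" "eventually (\<lambda>x. f x = g x) F" shows "(g \<longlongrightarrow> l') F"
  using Lim_transform_eventually[OF assms(1) assms(3)] assms(2) by simp

lemma det_main:
  fixes g X :: "real \<Rightarrow> real" and \<theta> \<mu> w :: real
  assumes th: "\<theta> > 0" and gc: "continuous_on {0..} g"
    and gb: "\<And>t. t \<ge> 0 \<Longrightarrow> \<bar>g t\<bar> \<le> w * exp (\<theta>/2 * t)"
    and Xc: "continuous_on {0..} X"
    and Xe: "\<And>t. t \<ge> 0 \<Longrightarrow> X t = \<mu> * \<theta> * t + \<theta> * integral {0..t} X + g t"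
  defines "L \<equiv> \<mu> + \<theta> * (LBINT s:{0..}. exp (- \<theta> * s) * g s)"
  shows "((\<lambda>T. exp (- \<theta> * T) * X T) \<longlongrightarrow> L) at_top \<and>
      ((\<lambda>T. exp (- \<theta> * T) * integral {0..T} X) \<longlongrightarrow> L / \<theta>) at_top \<and>
      ((\<lambda>T. exp (- \<theta> * T) / T * integral {0..T} (\<lambda>s. s * X s)) \<longlongrightarrow> L / \<theta>) at_top \<and>
      (\<forall>\<delta>>0. ((\<lambda>T. exp (- \<theta> * T) / T powr \<delta> * integral {0..T} (\<lambda>s. \<bar>X s\<bar>)) \<longlongrightarrow> 0) at_top) \<and>
      ((\<lambda>T. exp (- 2 * \<theta> * T) * integral {0..T} (\<lambda>s. (X s)\<^sup>2)) \<longlongrightarrow> L\<^sup>2 / (2 * \<theta>)) at_top"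
proof -
  define Y where "Y = (\<lambda>t. integral {0..t} X)"
  define J where "J = (LBINT s:{0..}. exp (- \<theta> * s) * g s)"
  define k where "k = (\<lambda>s. exp (- \<theta> * s) * g s)"
  have kc: "continuous_on {0..} k" unfolding k_def by (intro continuous_intros gc)
  have kint: "set_integrable lborel {0..} k"
    unfolding set_integrable_def
  proof (rule Bochner_Integration.integrable_bound)
    show "integrable lborel (\<lambda>s. indicator {0..} s *\<^sub>R (w * exp (- (\<theta>/2) * s)))"
    proof -
      from exp_set_integrable[of "\<theta>/2"] th
      have "integrable lborel (\<lambda>x. indicator {0..} x *\<^sub>R exp (- (\<theta>/2)*x))" by (simp add: set_integrable_def)
      then have "integrable lborel (\<lambda>x. w * (indicator {0..} x *\<^sub>R exp (- (\<theta>/2)*x)))" by (rule integrable_mult_right)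
      then show ?thesis by (simp add: mult.left_commute)
    qed
    show "(\<lambda>s. indicator {0..} s *\<^sub>R k s) \<in> borel_measurable lborel"
      using borel_measurable_continuous_on_indicator[OF _ kc] by simp
    show "AE s in lborel. norm (indicator {0..} s *\<^sub>R k s) \<le> norm (indicator {0..} s *\<^sub>R (w * exp (- (\<theta>/2) * s)))"
    proof (intro AE_I2)
      fix s :: real
      show "norm (indicator {0..} s *\<^sub>R k s) \<le> norm (indicator {0..} s *\<^sub>R (w * exp (- (\<theta>/2) * s)))"
      proof (cases "s \<ge> 0")
        case True
        have "\<bar>k s\<bar> = exp (- \<theta> * s) * \<bar>g s\<bar>" by (simp add: k_def abs_mult)
        also have "\<dots> \<le> exp (- \<theta> * s) * (w * exp (\<theta>/2 * s))" using gb[OF True] by (intro mult_left_mono) auto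
        also have "\<dots> = w * (exp (- \<theta> * s) * exp (\<theta>/2 * s))" by simp
        also have "exp (- \<theta> * s) * exp (\<theta>/2 * s) = exp (- \<theta> * s + \<theta>/2 * s)" by (simp only: exp_add)
        also have "- \<theta> * s + \<theta>/2 * s = - (\<theta>/2) * s" by simp
        
        finally have "\<bar>k s\<bar> \<le> w * exp (- (\<theta>/2) * s)" .
        then show ?thesis using True by (simp add: indicator_def)
      qed (simp add: indicator_def)
    qed
  qed
  have Ilim: "((\<lambda>T. integral {0..T} k) \<longlongrightarrow> J) at_top"
  proof -
    have "((\<lambda>T. set_lebesgue_integral lborel {0..T} k) \<longlongrightarrow> set_lebesgue_integral lborel {0..} k) at_top"
      by (rule tendsto_set_lebesgue_integral_at_top[OF _ kint]) auto
    moreover have "set_lebesgue_integral lborel {0..T} k = integral {0..T} k" for T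
      by (rule set_borel_integral_eq_integral(2)[OF set_integrable_subset[OF kint]]) auto
    ultimately show ?thesis by (simp add: J_def k_def)
  qed

  have kb: "\<bar>k s\<bar> \<le> w * exp (- (\<theta>/2) * s)" if "s \<ge> 0" for s
  proof -
    have "\<bar>k s\<bar> = exp (- \<theta> * s) * \<bar>g s\<bar>" by (simp add: k_def abs_mult)
    also have "\<dots> \<le> exp (- \<theta> * s) * (w * exp (\<theta>/2 * s))" using gb[OF that] by (intro mult_left_mono) auto
    also have "\<dots> = w * (exp (- \<theta> * s) * exp (\<theta>/2 * s))" by simp
    also have "exp (- \<theta> * s) * exp (\<theta>/2 * s) = exp (- \<theta> * s + \<theta>/2 * s)" by (simp only: exp_add)
    also have "- \<theta> * s + \<theta>/2 * s = - (\<theta>/2) * s" by simp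
    finally show ?thesis .
  qed
  have Yd: "(Y has_real_derivative X x) (at x within {0..T})" if "0 \<le> x" "x \<le> T" for x T
  proof -
    have "continuous_on {0..T} X" using Xc by (rule continuous_on_subset) auto
    from integral_has_real_derivative[OF this, of x] that show ?thesis by (simp add: Y_def)
  qed
  define H where "H = (\<lambda>x. exp (-\<theta>*x) * Y x - \<mu>*\<theta>*(1/\<theta>^2 - (x/\<theta> + 1/\<theta>^2)*exp (-\<theta>*x)))"
  have Zeq: "exp (-\<theta>*T) * Y T = \<mu>*\<theta>*(1/\<theta>^2 - (T/\<theta> + 1/\<theta>^2)*exp (-\<theta>*T)) + integral {0..T} k"
    if T: "T \<ge> 0" for T
  proof -
    have "(H has_real_derivative k x) (at x within {0..T})" if x: "x \<in> {0..T}" for x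
    proof -
      have "(H has_real_derivative (exp (-\<theta>*x) * X x + (- \<theta> * exp (-\<theta>*x)) * Y x
          - \<mu>*\<theta>*(0 - ((1/\<theta>) * exp (-\<theta>*x) + (x/\<theta> + 1/\<theta>^2) * (- \<theta> * exp (-\<theta>*x)))))) (at x within {0..T})"
        unfolding H_def using x th
        by (auto intro!: derivative_eq_intros Yd)
      moreover have "exp (-\<theta>*x) * X x + (- \<theta> * exp (-\<theta>*x)) * Y x
          - \<mu>*\<theta>*(0 - ((1/\<theta>) * exp (-\<theta>*x) + (x/\<theta> + 1/\<theta>^2) * (- \<theta> * exp (-\<theta>*x)))) = k x"
        using Xe[of x] x th unfolding k_def Y_def by (simp add: field_simps power2_eq_square)
      ultimately show ?thesis by simp
    qed
    then have "(k has_integral H T - H 0) {0..T}"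
      using T by (intro fundamental_theorem_of_calculus) (auto simp: has_real_derivative_iff_has_vector_derivative)
    then have "integral {0..T} k = H T - H 0" by (rule integral_unique)
    moreover have "H 0 = 0" using th by (simp add: H_def Y_def power2_eq_square field_simps)
    ultimately show ?thesis by (simp add: H_def)
  qed
  have Zlim: "((\<lambda>T. exp (-\<theta>*T) * Y T) \<longlongrightarrow> L/\<theta>) at_top"
  proof -
    have "((\<lambda>T. \<mu>*\<theta>*(1/\<theta>^2 - (T/\<theta> + 1/\<theta>^2)*exp (-\<theta>*T)) + integral {0..T} k) \<longlongrightarrow> \<mu>*\<theta>*(1/\<theta>^2) + J) at_top"
      by (intro tendsto_intros lim1 th Ilim)
    moreover have "\<mu>*\<theta>*(1/\<theta>^2) + J = L/\<theta>" using th by (simp add: L_def J_def field_simps power2_eq_square)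
    moreover have "eventually (\<lambda>T. \<mu>*\<theta>*(1/\<theta>^2 - (T/\<theta> + 1/\<theta>^2)*exp (-\<theta>*T)) + integral {0..T} k = exp (-\<theta>*T) * Y T) at_top"
      using eventually_ge_at_top[of 0] by eventually_elim (rule Zeq[symmetric])
    ultimately show ?thesis by (rule tl_ev)
  qed
  have ulim: "((\<lambda>T. exp (-\<theta>*T) * X T) \<longlongrightarrow> L) at_top"
  proof -
    have k0: "(k \<longlongrightarrow> 0) at_top"
    proof (rule Lim_null_comparison)
      show "eventually (\<lambda>s. norm (k s) \<le> w * exp (- (\<theta>/2) * s)) at_top"
        using eventually_ge_at_top[of 0] by eventually_elim (use kb in auto)
      show "((\<lambda>s. w * exp (- (\<theta>/2) * s)) \<longlongrightarrow> 0) at_top" by (rule lim8[OF th])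
    qed
    have "((\<lambda>T. \<mu>*\<theta>*(T * exp (-\<theta>*T)) + \<theta> * (exp (-\<theta>*T) * Y T) + k T) \<longlongrightarrow> \<mu>*\<theta>*0 + \<theta>*(L/\<theta>) + 0) at_top"
      by (intro tendsto_intros lim2 th Zlim k0)
    moreover have "\<mu>*\<theta>*0 + \<theta>*(L/\<theta>) + 0 = L" using th by simp
    moreover have "eventually (\<lambda>T. \<mu>*\<theta>*(T * exp (-\<theta>*T)) + \<theta> * (exp (-\<theta>*T) * Y T) + k T = exp (-\<theta>*T) * X T) at_top"
      using eventually_ge_at_top[of 0] by eventually_elim (simp add: Xe[of] k_def Y_def algebra_simps)
    ultimately show ?thesis by (rule tl_ev)
  qed
  have expm: "exp (-\<theta>*T) = 1 / exp (\<theta>*T)" for T by (simp add: exp_minus field_simps)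
  have r3: "((\<lambda>T. exp (- \<theta> * T) / T * integral {0..T} (\<lambda>s. s * X s)) \<longlongrightarrow> L / \<theta>) at_top"
  proof -
    have c: "continuous_on {0..} (\<lambda>s. s * X s)" by (intro continuous_intros Xc)
    have "((\<lambda>T. integral {0..T} (\<lambda>s. s * X s) / (T * exp (\<theta>*T))) \<longlongrightarrow> L / \<theta>) at_top"
    proof (rule lhospital_at_top_at_top[where f' = "\<lambda>T. T * X T" and g' = "\<lambda>T. exp (\<theta>*T) + T * (exp (\<theta>*T) * \<theta>)"])
      show "filterlim (\<lambda>T. T * exp (\<theta>*T)) at_top at_top" by (rule lim6[OF th])
      show "eventually (\<lambda>T. exp (\<theta>*T) + T * (exp (\<theta>*T) * \<theta>) \<noteq> 0) at_top"
        using eventually_ge_at_top[of 0]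
      proof eventually_elim
        case (elim T)
        have "0 < exp (\<theta>*T) + T * (exp (\<theta>*T) * \<theta>)" using elim th by (intro add_pos_nonneg) auto
        then show ?case by simp
      qed
      show "eventually (\<lambda>T. ((\<lambda>T. integral {0..T} (\<lambda>s. s * X s)) has_real_derivative T * X T) (at T)) at_top"
        using eventually_gt_at_top[of 0] by eventually_elim (rule deriv_int[OF c])
      show "eventually (\<lambda>T. ((\<lambda>T. T * exp (\<theta>*T)) has_real_derivative exp (\<theta>*T) + T * (exp (\<theta>*T) * \<theta>)) (at T)) at_top"
        by (intro always_eventually allI) (auto intro!: derivative_eq_intros)
      have "((\<lambda>T. (exp (-\<theta>*T) * X T) * (T / (1 + \<theta> * T))) \<longlongrightarrow> L * (1/\<theta>)) at_top"
        by (intro tendsto_intros ulim lim3 th)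
      moreover have "L * (1/\<theta>) = L / \<theta>" by simp
      moreover have "eventually (\<lambda>T. (exp (-\<theta>*T) * X T) * (T / (1 + \<theta> * T)) = T * X T / (exp (\<theta>*T) + T * (exp (\<theta>*T) * \<theta>))) at_top"
        using eventually_ge_at_top[of 0] by eventually_elim (use th in \<open>simp add: exp_minus field_simps add_pos_nonneg\<close>)
      ultimately show "((\<lambda>T. T * X T / (exp (\<theta>*T) + T * (exp (\<theta>*T) * \<theta>))) \<longlongrightarrow> L / \<theta>) at_top"
        by (rule tl_ev)
    qed
    moreover have "eventually (\<lambda>T. integral {0..T} (\<lambda>s. s * X s) / (T * exp (\<theta>*T)) = exp (- \<theta> * T) / T * integral {0..T} (\<lambda>s. s * X s)) at_top"
      by (intro always_eventually allI) (simp add: exp_minus field_simps)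
    ultimately show ?thesis by (rule Lim_transform_eventually)
  qed
  have r4: "((\<lambda>T. exp (- \<theta> * T) / T powr \<delta> * integral {0..T} (\<lambda>s. \<bar>X s\<bar>)) \<longlongrightarrow> 0) at_top" if d: "\<delta> > 0" for \<delta>
  proof -
    have c: "continuous_on {0..} (\<lambda>s. \<bar>X s\<bar>)" by (intro continuous_intros Xc)
    have "((\<lambda>T. integral {0..T} (\<lambda>s. \<bar>X s\<bar>) / (T powr \<delta> * exp (\<theta>*T))) \<longlongrightarrow> 0) at_top"
    proof (rule lhospital_at_top_at_top[where f' = "\<lambda>T. \<bar>X T\<bar>" and g' = "\<lambda>T. \<delta> * T powr (\<delta> - 1) * exp (\<theta>*T) + T powr \<delta> * (exp (\<theta>*T) * \<theta>)"])
      show "filterlim (\<lambda>T. T powr \<delta> * exp (\<theta>*T)) at_top at_top" by (rule lim7[OF th d])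
      show "eventually (\<lambda>T. \<delta> * T powr (\<delta> - 1) * exp (\<theta>*T) + T powr \<delta> * (exp (\<theta>*T) * \<theta>) \<noteq> 0) at_top"
        using eventually_gt_at_top[of 0]
      proof eventually_elim
        case (elim T)
        have "0 < \<delta> * T powr (\<delta> - 1) * exp (\<theta>*T) + T powr \<delta> * (exp (\<theta>*T) * \<theta>)" using elim th d by (intro add_pos_pos) auto
        then show ?case by simp
      qed
      show "eventually (\<lambda>T. ((\<lambda>T. integral {0..T} (\<lambda>s. \<bar>X s\<bar>)) has_real_derivative \<bar>X T\<bar>) (at T)) at_top"
        using eventually_gt_at_top[of 0] by eventually_elim (rule deriv_int[OF c])
      show "eventually (\<lambda>T. ((\<lambda>T. T powr \<delta> * exp (\<theta>*T)) has_real_derivative \<delta> * T powr (\<delta> - 1) * exp (\<theta>*T) + T powr \<delta> * (exp (\<theta>*T) * \<theta>)) (at T)) at_top"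
        using eventually_gt_at_top[of 0] by eventually_elim (auto intro!: derivative_eq_intros)
      have "((\<lambda>T. \<bar>exp (-\<theta>*T) * X T\<bar> / (\<delta> * T powr (\<delta> - 1) + \<theta> * T powr \<delta>)) \<longlongrightarrow> 0) at_top"
        by (intro tendsto_divide_0[OF tendsto_rabs[OF ulim]] filterlim_at_top_imp_at_infinity lim4 th d)
      moreover have "eventually (\<lambda>T. \<bar>exp (-\<theta>*T) * X T\<bar> / (\<delta> * T powr (\<delta> - 1) + \<theta> * T powr \<delta>) = \<bar>X T\<bar> / (\<delta> * T powr (\<delta> - 1) * exp (\<theta>*T) + T powr \<delta> * (exp (\<theta>*T) * \<theta>))) at_top"
        using eventually_gt_at_top[of 0] by eventually_elim (use th d in \<open>simp add: exp_minus field_simps abs_mult\<close>)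
      ultimately show "((\<lambda>T. \<bar>X T\<bar> / (\<delta> * T powr (\<delta> - 1) * exp (\<theta>*T) + T powr \<delta> * (exp (\<theta>*T) * \<theta>))) \<longlongrightarrow> 0) at_top"
        by (rule Lim_transform_eventually)
    qed
    moreover have "eventually (\<lambda>T. integral {0..T} (\<lambda>s. \<bar>X s\<bar>) / (T powr \<delta> * exp (\<theta>*T)) = exp (- \<theta> * T) / T powr \<delta> * integral {0..T} (\<lambda>s. \<bar>X s\<bar>)) at_top"
      by (intro always_eventually allI) (simp add: exp_minus field_simps)
    ultimately show ?thesis by (rule Lim_transform_eventually)
  qed
  have r5: "((\<lambda>T. exp (- 2 * \<theta> * T) * integral {0..T} (\<lambda>s. (X s)\<^sup>2)) \<longlongrightarrow> L\<^sup>2 / (2 * \<theta>)) at_top"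
  proof -
    have c: "continuous_on {0..} (\<lambda>s. (X s)\<^sup>2)" by (intro continuous_intros Xc)
    have e2: "exp (2*\<theta>*T) = (exp (\<theta>*T))^2" for T by (simp add: exp_double[symmetric] mult.assoc)
    have "((\<lambda>T. integral {0..T} (\<lambda>s. (X s)\<^sup>2) / exp (2*\<theta>*T)) \<longlongrightarrow> L\<^sup>2 / (2 * \<theta>)) at_top"
    proof (rule lhospital_at_top_at_top[where f' = "\<lambda>T. (X T)\<^sup>2" and g' = "\<lambda>T. exp (2*\<theta>*T) * (2*\<theta>)"])
      show "filterlim (\<lambda>T. exp (2*\<theta>*T)) at_top at_top" using lim5[of "2*\<theta>"] th by simp
      show "eventually (\<lambda>T. exp (2*\<theta>*T) * (2*\<theta>) \<noteq> 0) at_top" using th by simp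
      show "eventually (\<lambda>T. ((\<lambda>T. integral {0..T} (\<lambda>s. (X s)\<^sup>2)) has_real_derivative (X T)\<^sup>2) (at T)) at_top"
        using eventually_gt_at_top[of 0] by eventually_elim (rule deriv_int[OF c])
      show "eventually (\<lambda>T. ((\<lambda>T. exp (2*\<theta>*T)) has_real_derivative exp (2*\<theta>*T) * (2*\<theta>)) (at T)) at_top"
        by (intro always_eventually allI) (auto intro!: derivative_eq_intros)
      have "((\<lambda>T. (exp (-\<theta>*T) * X T)\<^sup>2 / (2*\<theta>)) \<longlongrightarrow> L\<^sup>2 / (2 * \<theta>)) at_top"
        using th by (intro tendsto_intros ulim) auto
      moreover have "eventually (\<lambda>T. (exp (-\<theta>*T) * X T)\<^sup>2 / (2*\<theta>) = (X T)\<^sup>2 / (exp (2*\<theta>*T) * (2*\<theta>))) at_top"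
      proof (intro always_eventually allI)
        fix T
        have a: "exp (2*\<theta>*T) = exp (\<theta>*T) * exp (\<theta>*T)" by (simp add: exp_add[symmetric] algebra_simps)
        have b: "exp (-\<theta>*T) = 1 / exp (\<theta>*T)" by (simp add: exp_minus field_simps)
        show "(exp (-\<theta>*T) * X T)\<^sup>2 / (2*\<theta>) = (X T)\<^sup>2 / (exp (2*\<theta>*T) * (2*\<theta>))"
          unfolding a b using th by (simp add: field_simps power2_eq_square)
      qed
      ultimately show "((\<lambda>T. (X T)\<^sup>2 / (exp (2*\<theta>*T) * (2*\<theta>))) \<longlongrightarrow> L\<^sup>2 / (2 * \<theta>)) at_top"
        by (rule Lim_transform_eventually)
    qed
    moreover have "eventually (\<lambda>T. integral {0..T} (\<lambda>s. (X s)\<^sup>2) / exp (2*\<theta>*T) = exp (- 2 * \<theta> * T) * integral {0..T} (\<lambda>s. (X s)\<^sup>2)) at_top"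
      by (intro always_eventually allI) (simp add: exp_minus field_simps)
    ultimately show ?thesis by (rule Lim_transform_eventually)
  qed
  show ?thesis using ulim Zlim r3 r4 r5 unfolding Y_def by blast
qed


lemma normal_nn_moment:
  assumes D: "distributed M lborel Z (normal_density 0 \<sigma>)" and sp: "\<sigma> > 0"
  shows "(\<integral>\<^sup>+\<omega>. ennreal ((Z \<omega>)^(2*p)) \<partial>M) = ennreal (fact (2 * p) / ((2 / \<sigma>\<^sup>2)^p * fact p))"
proof -
  have "(\<integral>\<^sup>+\<omega>. ennreal ((Z \<omega>)^(2*p)) \<partial>M) = (\<integral>\<^sup>+x. ennreal (normal_density 0 \<sigma> x) * ennreal (x^(2*p)) \<partial>lborel)"
    by (rule distributed_nn_integral[OF D, symmetric]) simp
  also have "\<dots> = (\<integral>\<^sup>+x. ennreal (normal_density 0 \<sigma> x * (x - 0)^(2*p)) \<partial>lborel)"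
    by (intro nn_integral_cong) (simp add: ennreal_mult' power_mult)
  also have "\<dots> = ennreal (integral\<^sup>L lborel (\<lambda>x. normal_density 0 \<sigma> x * (x - 0)^(2*p)))"
    by (intro nn_integral_eq_integral integrable.intros[OF normal_moment_even[OF sp]] AE_I2)
       (simp add: power_mult)
  also have "\<dots> = ennreal (fact (2 * p) / ((2 / \<sigma>\<^sup>2)^p * fact p))"
    using integral_normal_moment_even[OF sp, of 0 p] by simp
  finally show ?thesis .
qed

lemma gauss_moment:
  fixes M :: "'a measure" and G :: "real \<Rightarrow> 'a \<Rightarrow> real" and V :: real
  assumes P: "prob_space M" and GP: "gaussian_process M G" and CP: "centered_process M G"
    and var: "integral\<^sup>L M (\<lambda>\<omega>. (G t \<omega> - G s \<omega>)\<^sup>2) \<le> V"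
    and st: "s \<ge> 0" "t \<ge> 0" and p: "p > 0"
  shows "(\<integral>\<^sup>+\<omega>. ennreal ((G t \<omega> - G s \<omega>)^(2*p)) \<partial>M) \<le> ennreal (fact (2*p) / (2^p * fact p) * V^p)"
proof -
  interpret prob_space M by (rule P)
  define Z where "Z = (\<lambda>\<omega>. G t \<omega> - G s \<omega>)"
  have "gaussian_rv M (\<lambda>\<omega>. \<Sum>i<(2::nat). (\<lambda>i. if i = 0 then 1 else -1) i * G ((\<lambda>i. if i = 0 then t else s) i) \<omega>)"
    using GP st unfolding gaussian_process_def by auto
  moreover have "(\<lambda>\<omega>. \<Sum>i<(2::nat). (\<lambda>i. if i = 0 then 1 else -1) i * G ((\<lambda>i. if i = 0 then t else s) i) \<omega>) = Z"
    by (simp add: Z_def numeral_2_eq_2 fun_eq_iff)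
  ultimately have gZ: "gaussian_rv M Z" by simp
  have intG: "integrable M (G t)" "integrable M (G s)" "integral\<^sup>L M (G t) = 0" "integral\<^sup>L M (G s) = 0"
    using CP st unfolding centered_process_def by auto
  have EZ: "expectation Z = 0" unfolding Z_def using intG by simp
  have Vb: "integral\<^sup>L M (\<lambda>\<omega>. (Z \<omega>)\<^sup>2) \<le> V" using var by (simp add: Z_def)
  from gZ[unfolded gaussian_rv_def] show ?thesis
  proof (elim disjE exE conjE)
    fix m \<sigma> :: real assume \<sigma>: "\<sigma> > 0" and D: "distributed M lborel Z (normal_density m \<sigma>)"
    have "m = 0" using normal_distributed_expectation[OF \<sigma> D] EZ by simp
    with D have D0: "distributed M lborel Z (normal_density 0 \<sigma>)" by simp
    have Zm: "Z \<in> borel_measurable M" using distributed_measurable[OF D] by simp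
    have "(\<integral>\<^sup>+\<omega>. ennreal ((Z \<omega>)^(2*1)) \<partial>M) = ennreal (\<sigma>\<^sup>2)"
      using normal_nn_moment[OF D0 \<sigma>, of 1] \<sigma> by (simp add: field_simps)
    then have "(\<integral>\<^sup>+\<omega>. ennreal ((Z \<omega>)\<^sup>2) \<partial>M) = ennreal (\<sigma>\<^sup>2)" by simp
    then have "integral\<^sup>L M (\<lambda>\<omega>. (Z \<omega>)\<^sup>2) = \<sigma>\<^sup>2"
      using nn_integral_eq_integrable[of "\<lambda>\<omega>. (Z \<omega>)\<^sup>2" M "\<sigma>\<^sup>2"] Zm by auto
    with Vb have sV: "\<sigma>\<^sup>2 \<le> V" by simp
    have "(\<integral>\<^sup>+\<omega>. ennreal ((Z \<omega>)^(2*p)) \<partial>M) = ennreal (fact (2*p) / (2^p * fact p) * (\<sigma>\<^sup>2)^p)"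
      using normal_nn_moment[OF D0 \<sigma>, of p] \<sigma> by (simp add: field_simps power_divide)
    also have "\<dots> \<le> ennreal (fact (2*p) / (2^p * fact p) * V^p)"
      using sV by (intro ennreal_leI mult_left_mono power_mono) auto
    finally show ?thesis by (simp add: Z_def)
  next
    fix c0 assume AEc: "AE \<omega> in M. Z \<omega> = c0"
    have Zm: "Z \<in> borel_measurable M" unfolding Z_def using GP st unfolding gaussian_process_def
      by (intro borel_measurable_diff) auto
    have "expectation Z = expectation (\<lambda>_. c0)" by (rule integral_cong_AE) (use AEc Zm in auto)
    then have "c0 = 0" using EZ by (simp add: prob_space)
    then have "(\<integral>\<^sup>+\<omega>. ennreal ((Z \<omega>)^(2*p)) \<partial>M) = (\<integral>\<^sup>+\<omega>. 0 \<partial>M)"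
      using AEc p by (intro nn_integral_cong_AE) auto
    then show ?thesis by (simp add: Z_def)
  qed
qed

lemma chain_dyadic:
  fixes f :: "real \<Rightarrow> real" and n :: nat and b :: "nat \<Rightarrow> real"
  assumes inc: "\<And>k j. j < 2^k \<Longrightarrow> \<bar>f (real n + real (j+1) / 2^k) - f (real n + real j / 2^k)\<bar> \<le> b k"
    and bnn: "\<And>k. b k \<ge> 0"
  shows "j \<le> 2^K \<Longrightarrow> \<bar>f (real n + real j / 2^K) - f (real n)\<bar> \<le> (\<Sum>k\<le>K. b k)"
proof (induction K arbitrary: j)
  case 0
  then have "j = 0 \<or> j = 1" by auto
  then show ?case
  proof
    assume "j = 0" then show ?thesis using bnn[of 0] by simp
  next
    assume "j = 1" then show ?thesis using inc[of 0 0] by simp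
  qed
next
  case (Suc K)
  obtain i where ji: "j = 2*i \<or> j = 2*i+1" by (metis dvd_mult_div_cancel odd_two_times_div_two_succ)
  have sK: "(\<Sum>k\<le>K. b k) \<le> (\<Sum>k\<le>Suc K. b k)" using bnn[of "Suc K"] by simp
  from ji show ?case
  proof
    assume j: "j = 2*i"
    then have "i \<le> 2^K" using Suc.prems by simp
    from Suc.IH[OF this] have "\<bar>f (real n + real i / 2^K) - f (real n)\<bar> \<le> (\<Sum>k\<le>K. b k)" .
    moreover have "real j / 2^Suc K = real i / 2^K" using j by (simp add: field_simps)
    ultimately show ?thesis using sK by simp
  next
    assume j: "j = 2*i+1"
    then have i: "i < 2^K" using Suc.prems by simp
    from Suc.IH[of i] i have IH: "\<bar>f (real n + real i / 2^K) - f (real n)\<bar> \<le> (\<Sum>k\<le>K. b k)" by simp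
    have "2*i < 2^Suc K" using i by simp
    from inc[OF this] have "\<bar>f (real n + real (2*i+1) / 2^Suc K) - f (real n + real (2*i) / 2^Suc K)\<bar> \<le> b (Suc K)" .
    moreover have "real (2*i) / 2^Suc K = real i / 2^K" by (simp add: field_simps)
    ultimately have "\<bar>f (real n + real j / 2^Suc K) - f (real n + real i / 2^K)\<bar> \<le> b (Suc K)" using j by simp
    with IH have "\<bar>f (real n + real j / 2^Suc K) - f (real n)\<bar> \<le> (\<Sum>k\<le>K. b k) + b (Suc K)" by linarith
    then show ?thesis by simp
  qed
qed

lemma chain_cont:
  fixes f :: "real \<Rightarrow> real" and n :: nat and b :: "nat \<Rightarrow> real" and B :: real
  assumes inc: "\<And>k j. j < 2^k \<Longrightarrow> \<bar>f (real n + real (j+1) / 2^k) - f (real n + real j / 2^k)\<bar> \<le> b k"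
    and bnn: "\<And>k. b k \<ge> 0"
    and Bb: "\<And>K. (\<Sum>k\<le>K. b k) \<le> B"
    and fc: "continuous_on {real n..real n + 1} f"
    and t: "t \<in> {real n..real n + 1}"
  shows "\<bar>f t - f (real n)\<bar> \<le> B"
proof -
  define j where "j = (\<lambda>K::nat. nat \<lfloor>(t - real n) * 2^K\<rfloor>)"
  define tK where "tK = (\<lambda>K. real n + real (j K) / 2^K)"
  have jle: "j K \<le> 2^K" for K
  proof -
    have "(t - real n) * 2^K \<le> 2^K" using t by simp
    then have "(t - real n) * 2^K < 2^K + 1" by linarith
    then have "(t - real n) * 2^K < of_int (2^K) + 1" by simp
    then have "\<lfloor>(t - real n) * 2^K\<rfloor> \<le> 2^K" by (simp only: floor_le_iff)
    then show ?thesis unfolding j_def by (simp add: nat_le_iff)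
  qed
  have jr: "real (j K) = of_int \<lfloor>(t - real n) * 2^K\<rfloor>" for K
    unfolding j_def using t by simp
  have lo: "t - 1/2^K \<le> tK K" and hi: "tK K \<le> t" for K
  proof -
    have "(t - real n) * 2^K - 1 \<le> real (j K)" "real (j K) \<le> (t - real n) * 2^K"
      unfolding jr by linarith+
    note h = this
    have e1: "t - 1/2^K = real n + ((t - real n) * 2^K - 1) / 2^K" by (simp add: field_simps)
    have e2: "t = real n + ((t - real n) * 2^K) / 2^K" by (simp add: field_simps)
    show "t - 1/2^K \<le> tK K" unfolding tK_def e1 using h(1) by (intro add_left_mono divide_right_mono) auto
    show "tK K \<le> t" unfolding tK_def using h(2) by (subst e2) (intro add_left_mono divide_right_mono, auto)
  qed
  have tKt: "tK \<longlonglongrightarrow> t"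
  proof (rule tendsto_sandwich[OF _ _ _ tendsto_const])
    show "eventually (\<lambda>K. t - 1/2^K \<le> tK K) sequentially" using lo by simp
    show "eventually (\<lambda>K. tK K \<le> t) sequentially" using hi by simp
    have "(\<lambda>K. t - (1/2::real)^K) \<longlonglongrightarrow> t - 0" by (intro tendsto_intros) simp
    then show "(\<lambda>K. t - 1/2^K) \<longlonglongrightarrow> t" by (simp add: power_one_over)
  qed
  have tKin: "tK K \<in> {real n..real n + 1}" for K
    using lo[of K] hi[of K] t jle[of K] unfolding tK_def by (auto simp: field_simps)
  have "(\<lambda>K. f (tK K)) \<longlonglongrightarrow> f t"
    by (rule continuous_on_tendsto_compose[OF fc tKt t]) (use tKin in simp)
  then have "(\<lambda>K. \<bar>f (tK K) - f (real n)\<bar>) \<longlonglongrightarrow> \<bar>f t - f (real n)\<bar>" by (intro tendsto_intros)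
  moreover have "\<bar>f (tK K) - f (real n)\<bar> \<le> B" for K
    using chain_dyadic[OF inc bnn jle[of K]] Bb[of K] unfolding tK_def by linarith
  ultimately show ?thesis by (intro LIMSEQ_le_const2) auto
qed

lemma abs_le_pow_bound:
  fixes x l :: real and m :: nat
  assumes "l > 0" "m > 0"
  shows "\<bar>x\<bar> \<le> l + x^(2*m) / l^(2*m-1)"
proof (cases "\<bar>x\<bar> \<le> l")
  case True
  have "0 \<le> x^(2*m) / l^(2*m-1)" using assms by (simp add: power_mult)
  then show ?thesis using True by linarith
next
  case False
  have "l^(2*m-1) \<le> \<bar>x\<bar>^(2*m-1)" using False assms by (intro power_mono) auto
  then have "\<bar>x\<bar> * l^(2*m-1) \<le> \<bar>x\<bar> * \<bar>x\<bar>^(2*m-1)" by (intro mult_left_mono) auto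
  also have "\<dots> = \<bar>x\<bar>^(2*m)" using assms by (metis Suc_diff_1 mult_pos_pos pos2 power_Suc)
  also have "\<dots> = x^(2*m)" by (simp add: power_mult)
  finally have "\<bar>x\<bar> \<le> x^(2*m) / l^(2*m-1)" using assms by (simp add: field_simps)
  then show ?thesis using assms by linarith
qed



lemma level_bound:
  fixes \<gamma> c C h :: real and m k :: nat
  assumes g: "\<gamma> > 0" and c: "c > 0" and C: "C \<ge> 0" and m: "m > 0" and mg: "real m * \<gamma> \<ge> 1"
    and h: "h = 2 powr (\<gamma>/2)"
  shows "2^k * (C * (c * (1/2^k) powr (2*\<gamma>))^m) / ((1/h)^k)^(2*m-1) \<le> C * c^m * (1/h)^k"
proof -
  define a where "a = h^k"
  have hpos: "h > 0" using h by simp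
  have apos: "a > 0" using hpos by (simp add: a_def)
  have "a = 2 powr (\<gamma>/2 * real k)" unfolding a_def h by (simp add: powr_realpow[symmetric] powr_powr)
  have a4: "(1/2^k) powr (2*\<gamma>) = 1 / a^4"
  proof -
    have "(1/2^k::real) powr (2*\<gamma>) = (2 powr (- real k)) powr (2*\<gamma>)"
      by (simp add: powr_minus_divide powr_realpow)
    also have "\<dots> = 2 powr (- real k * (2*\<gamma>))" by (simp add: powr_powr)
    also have "a^4 = 2 powr (real k * (2*\<gamma>))" unfolding a_def h
      by (simp add: powr_realpow[symmetric] powr_powr power_mult[symmetric] ac_simps)
    ultimately show ?thesis by (simp add: powr_minus_divide)
  qed
  have a2m: "2^k \<le> a^(2*m)"
  proof -
    have "a^(2*m) = (2 powr (\<gamma> * real m))^k" unfolding a_def h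
      by (simp add: powr_realpow[symmetric] powr_powr power_mult[symmetric] ac_simps)
    moreover have "2 \<le> 2 powr (\<gamma> * real m)"
      using mg powr_mono[of 1 "\<gamma> * real m" 2] by (simp add: mult.commute)
    ultimately show ?thesis by (simp add: power_mono)
  qed
  have pa: "(a^4)^m = (a^m)^4" by (metis power_mult mult.commute)
  have hk: "(1/h)^k = 1/a" by (simp add: a_def power_one_over)
  have "2^k * (C * (c * (1/2^k) powr (2*\<gamma>))^m) / ((1/h)^k)^(2*m-1) = C * c^m * (2^k * a^(2*m-1) / a^(4*m))"
    unfolding a4 hk using apos pa by (simp add: power_divide power_mult field_simps power_one_over)
  also have "2^k * a^(2*m-1) / a^(4*m) \<le> 1 / a"
  proof -
    have "2^k * a^(2*m-1) * a \<le> a^(2*m) * a^(2*m)"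
    proof -
      have s: "Suc (2*m-1) = 2*m" using m by simp
      have "a^(2*m-1) * a = a^(2*m)" using power_Suc2[of a "2*m-1"] unfolding s by simp
      then have "2^k * a^(2*m-1) * a = 2^k * a^(2*m)" by (simp add: mult.assoc)
      also have "\<dots> \<le> a^(2*m) * a^(2*m)" using a2m apos by (intro mult_right_mono) auto
      finally show ?thesis .
    qed
    also have "\<dots> = a^(4*m)" by (simp add: power_add[symmetric])
    finally show ?thesis using apos by (simp add: field_simps)
  qed
  then have "C * c^m * (2^k * a^(2*m-1) / a^(4*m)) \<le> C * c^m * (1/a)"
    using C c by (intro mult_left_mono) auto
  finally show ?thesis by (simp add: hk)
qed

lemma weight_summable:
  fixes \<theta> c D \<gamma> :: real
  assumes th: "\<theta> > 0" and c: "c \<ge> 0" and D: "D \<ge> 0" and g: "\<gamma> < 1" "\<gamma> > 0"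
  shows "summable (\<lambda>n::nat. exp (-(\<theta>/2) * real n) * (1 + c * real n powr (2*\<gamma>) + D))"
proof (rule summable_comparison_test')
  show "summable (\<lambda>n. (1 + D + 64 * c / \<theta>^2) * exp (-\<theta>/4) ^ n)"
    using th by (intro summable_mult summable_geometric) simp
  fix n :: nat assume "n \<ge> 0"
  have np: "real n powr (2*\<gamma>) \<le> real n ^ 2"
  proof (cases "n = 0")
    case False
    then have "real n powr (2*\<gamma>) \<le> real n powr 2" using g by (intro powr_mono) auto
    then show ?thesis by (simp add: powr_realpow[symmetric])
  qed simp
  have e: "exp (-\<theta>/4) ^ n = exp (-(\<theta>/4) * real n)" by (simp add: exp_of_nat_mult[symmetric] mult.commute)
  have n2: "real n ^ 2 * exp (-(\<theta>/2) * real n) \<le> 64 / \<theta>^2 * exp (-(\<theta>/4) * real n)"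
  proof -
    have "\<theta> * real n / 8 \<le> exp (\<theta> * real n / 8)" using exp_ge_add_one_self[of "\<theta> * real n / 8"] by linarith
    then have "(\<theta> * real n / 8)^2 \<le> (exp (\<theta> * real n / 8))^2" using th by (intro power_mono) auto
    also have "(exp (\<theta> * real n / 8))^2 = exp (\<theta> * real n / 4)" by (simp add: exp_double[symmetric] power2_eq_square exp_add[symmetric])
    finally have "real n ^ 2 \<le> 64 / \<theta>^2 * exp (\<theta> * real n / 4)" using th by (simp add: field_simps power2_eq_square)
    then have "real n ^ 2 * exp (-(\<theta>/2) * real n) \<le> 64 / \<theta>^2 * exp (\<theta> * real n / 4) * exp (-(\<theta>/2) * real n)"
      by (intro mult_right_mono) auto
    also have "\<dots> = 64 / \<theta>^2 * (exp (\<theta> * real n / 4) * exp (-(\<theta>/2) * real n))" by simp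
    also have "exp (\<theta> * real n / 4) * exp (-(\<theta>/2) * real n) = exp (\<theta> * real n / 4 + (-(\<theta>/2) * real n))"
      by (simp only: exp_add)
    also have "\<theta> * real n / 4 + (-(\<theta>/2) * real n) = -(\<theta>/4) * real n" by simp
    finally show ?thesis .
  qed
  have e2: "exp (-(\<theta>/2) * real n) \<le> exp (-(\<theta>/4) * real n)" using th by simp
  have "norm (exp (-(\<theta>/2) * real n) * (1 + c * real n powr (2*\<gamma>) + D))
      = exp (-(\<theta>/2) * real n) * (1 + D) + c * (real n powr (2*\<gamma>) * exp (-(\<theta>/2) * real n))"
    using c D by (simp add: algebra_simps)
  also have "\<dots> \<le> exp (-(\<theta>/4) * real n) * (1 + D) + c * (64 / \<theta>^2 * exp (-(\<theta>/4) * real n))"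
  proof (intro add_mono mult_right_mono mult_left_mono e2)
    show "real n powr (2*\<gamma>) * exp (-(\<theta>/2) * real n) \<le> 64 / \<theta>^2 * exp (-(\<theta>/4) * real n)"
    proof -
      have "real n powr (2*\<gamma>) * exp (-(\<theta>/2) * real n) \<le> real n ^ 2 * exp (-(\<theta>/2) * real n)"
        using np by (intro mult_right_mono) auto
      then show ?thesis using n2 by linarith
    qed
  qed (use c D in auto)
  also have "\<dots> = (1 + D + 64 * c / \<theta>^2) * exp (-\<theta>/4) ^ n" unfolding e by (simp add: algebra_simps)
  finally show "norm (exp (-(\<theta>/2) * real n) * (1 + c * real n powr (2*\<gamma>) + D)) \<le> (1 + D + 64 * c / \<theta>^2) * exp (-\<theta>/4) ^ n" .
qed



lemma holder_cont:
  fixes f :: "real \<Rightarrow> real" and \<alpha> :: real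
  assumes a: "\<alpha> > 0"
    and H: "\<And>T. T > 0 \<Longrightarrow> \<exists>K. \<forall>s\<in>{0..T}. \<forall>t\<in>{0..T}. \<bar>f t - f s\<bar> \<le> K * \<bar>t - s\<bar> powr \<alpha>"
  shows "continuous_on {0..} f"
  unfolding continuous_on_def
proof
  fix x :: real assume x: "x \<in> {0..}"
  obtain K where K: "\<forall>s\<in>{0..x+1}. \<forall>t\<in>{0..x+1}. \<bar>f t - f s\<bar> \<le> K * \<bar>t - s\<bar> powr \<alpha>"
    using H[of "x+1"] x by auto
  have "((\<lambda>t. f t - f x) \<longlongrightarrow> 0) (at x within {0..})"
  proof (rule Lim_null_comparison)
    show "eventually (\<lambda>t. norm (f t - f x) \<le> K * \<bar>t - x\<bar> powr \<alpha>) (at x within {0..})"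
      unfolding eventually_at_le
    proof (intro exI[of _ 1] conjI ballI impI)
      fix t :: real assume "t \<in> {0..}" "t \<noteq> x \<and> dist t x \<le> 1"
      then have "t \<in> {0..x+1}" by (auto simp: dist_real_def)
      with K x show "norm (f t - f x) \<le> K * \<bar>t - x\<bar> powr \<alpha>" by auto
    qed simp
    have "((\<lambda>t. \<bar>t - x\<bar> powr \<alpha>) \<longlongrightarrow> 0) (at x within {0..})"
    proof (rule tendsto_zero_powrI)
      have "((\<lambda>t. \<bar>t - x\<bar>) \<longlongrightarrow> \<bar>x - x\<bar>) (at x within {0..})" by (intro tendsto_intros)
      then show "((\<lambda>t. \<bar>t - x\<bar>) \<longlongrightarrow> 0) (at x within {0..})" by simp
    qed (use a in auto)
    then have "((\<lambda>t. K * \<bar>t - x\<bar> powr \<alpha>) \<longlongrightarrow> K * 0) (at x within {0..})" by (intro tendsto_intros)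
    then show "((\<lambda>t. K * \<bar>t - x\<bar> powr \<alpha>) \<longlongrightarrow> 0) (at x within {0..})" by simp
  qed
  then show "(f \<longlongrightarrow> f x) (at x within {0..})" by (simp add: Lim_null[symmetric])
qed

lemma abs_le_one_plus_sq: "\<bar>x::real\<bar> \<le> 1 + x^2"
proof (cases "\<bar>x\<bar> \<le> 1")
  case True
  have "0 \<le> x^2" by simp
  then show ?thesis using True by linarith
next
  case False
  then have "\<bar>x\<bar> * 1 \<le> \<bar>x\<bar> * \<bar>x\<bar>" by (intro mult_left_mono) auto
  also have "\<bar>x\<bar> * \<bar>x\<bar> = x^2" by (simp add: power2_eq_square)
  finally show ?thesis by linarith
qed

theorem mainTheorem2:
  fixes M :: "'a measure" and G X :: "real \<Rightarrow> 'a \<Rightarrow> real"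
    and c \<gamma> \<theta> \<mu> :: real
  assumes "prob_space M"
    and "gaussian_process M G"
    and "centered_process M G"
    and "AE \<omega> in M. G 0 \<omega> = 0"
    and "c > 0" and "0 < \<gamma>" and "\<gamma> < 1"
    and "\<And>s t. s \<ge> 0 \<Longrightarrow> t \<ge> 0 \<Longrightarrow>
           integral\<^sup>L M (\<lambda>\<omega>. (G t \<omega> - G s \<omega>)\<^sup>2) \<le> c * \<bar>t - s\<bar> powr (2 * \<gamma>)"
    and "\<And>\<omega> \<epsilon> T. \<omega> \<in> space M \<Longrightarrow> 0 < \<epsilon> \<Longrightarrow> \<epsilon> < \<gamma> \<Longrightarrow> T > 0 \<Longrightarrow>
           \<exists>K. \<forall>s\<in>{0..T}. \<forall>t\<in>{0..T}. \<bar>G t \<omega> - G s \<omega>\<bar> \<le> K * \<bar>t - s\<bar> powr (\<gamma> - \<epsilon>)"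
    and "\<theta> > 0"
    and "\<And>\<omega>. \<omega> \<in> space M \<Longrightarrow> continuous_on {0..} (\<lambda>t. X t \<omega>)"
    and "\<And>\<omega> t. \<omega> \<in> space M \<Longrightarrow> t \<ge> 0 \<Longrightarrow>
           X t \<omega> = \<mu> * \<theta> * t + \<theta> * integral {0..t} (\<lambda>s. X s \<omega>) + G t \<omega>"
  shows "AE \<omega> in M.
      ((\<lambda>T. exp (- \<theta> * T) * X T \<omega>) \<longlongrightarrow> \<mu> + zeta_inf \<theta> G \<omega>) at_top \<and>
      ((\<lambda>T. exp (- \<theta> * T) * integral {0..T} (\<lambda>s. X s \<omega>))
         \<longlongrightarrow> (\<mu> + zeta_inf \<theta> G \<omega>) / \<theta>) at_top \<and>
      ((\<lambda>T. exp (- \<theta> * T) / T * integral {0..T} (\<lambda>s. s * X s \<omega>))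
         \<longlongrightarrow> (\<mu> + zeta_inf \<theta> G \<omega>) / \<theta>) at_top \<and>
      (\<forall>\<delta>>0. ((\<lambda>T. exp (- \<theta> * T) / T powr \<delta> * integral {0..T} (\<lambda>s. \<bar>X s \<omega>\<bar>))
         \<longlongrightarrow> 0) at_top) \<and>
      ((\<lambda>T. exp (- 2 * \<theta> * T) * integral {0..T} (\<lambda>s. (X s \<omega>)\<^sup>2))
         \<longlongrightarrow> (\<mu> + zeta_inf \<theta> G \<omega>)\<^sup>2 / (2 * \<theta>)) at_top"
proof -
  note P = assms(1) and GP = assms(2) and CP = assms(3) and G0 = assms(4) and c = assms(5)
    and g0 = assms(6) and g1 = assms(7) and var = assms(8) and Hol = assms(9) and th = assms(10)
    and Xc = assms(11) and Xe = assms(12)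
  interpret prob_space M by (rule P)
  have Gm: "G t \<in> borel_measurable M" if "t \<ge> 0" for t
    using GP that unfolding gaussian_process_def by auto
  define m :: nat where "m = nat \<lceil>1/\<gamma>\<rceil> + 1"
  have m0: "m > 0" by (simp add: m_def)
  have mg: "real m * \<gamma> \<ge> 1"
  proof -
    have "1/\<gamma> \<le> real m" unfolding m_def by linarith
    then show ?thesis using g0 by (simp add: field_simps)
  qed
  define h where "h = 2 powr (\<gamma>/2)"
  define q where "q = 1/h"
  have h1: "h > 1" unfolding h_def using g0 powr_less_mono[of 0 "\<gamma>/2" 2] by simp
  have q0: "q > 0" and q1: "q < 1" using h1 by (auto simp: q_def)
  define C where "C = fact (2*m) / (2^m * fact m :: real)"
  have C0: "C \<ge> 0" by (simp add: C_def)
  define Q where "Q = 1 + C * c^m"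
  define D where "D = (\<lambda>n k j \<omega>. G (real n + real (j+1) / 2^k) \<omega> - G (real n + real j / 2^k) \<omega>)"
  define b where "b = (\<lambda>n k \<omega>. q^k + (\<Sum>j<2^k. (D n k j \<omega>)^(2*m)) / (q^k)^(2*m-1))"
  define S where "S = (\<lambda>n \<omega>. \<Sum>k. ennreal (b n k \<omega>))"
  define e where "e = (\<lambda>n::nat. exp (-(\<theta>/2) * real n))"
  define W where "W = (\<lambda>\<omega>. \<Sum>n. ennreal (e n) * (ennreal \<bar>G (real n) \<omega>\<bar> + S n \<omega>))"
  have Gm': "(\<lambda>\<omega>. G (real n + real j / 2^k) \<omega>) \<in> borel_measurable M" for n j k
    by (rule Gm) simp
  have Gn: "(\<lambda>\<omega>. G (real n) \<omega>) \<in> borel_measurable M" for n by (rule Gm) simp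
  have Dm[measurable]: "D n k j \<in> borel_measurable M" for n k j
    unfolding D_def by (intro borel_measurable_diff Gm')
  have bm[measurable]: "b n k \<in> borel_measurable M" for n k
    unfolding b_def by measurable
  have bnn: "b n k \<omega> \<ge> 0" for n k \<omega>
    unfolding b_def using q0 by (intro add_nonneg_nonneg divide_nonneg_pos sum_nonneg) (auto simp: power_mult)
  have Sm[measurable]: "S n \<in> borel_measurable M" for n unfolding S_def by measurable
  have Gnm[measurable]: "(\<lambda>\<omega>. ennreal \<bar>G (real n) \<omega>\<bar>) \<in> borel_measurable M" for n
    using Gn by measurable
  have Wm: "W \<in> borel_measurable M" unfolding W_def by measurable

  have E1: "(\<integral>\<^sup>+\<omega>. ennreal ((D n k j \<omega>)^(2*m)) \<partial>M) \<le> ennreal (C * (c * (1/2^k) powr (2*\<gamma>))^m)" for n k j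
  proof -
    have dif: "\<bar>(real n + real (j+1) / 2^k) - (real n + real j / 2^k)\<bar> = 1/2^k"
      by (simp add: field_simps)
    have "(\<integral>\<^sup>+\<omega>. ennreal ((G (real n + real (j+1) / 2^k) \<omega> - G (real n + real j / 2^k) \<omega>)^(2*m)) \<partial>M)
        \<le> ennreal (fact (2*m) / (2^m * fact m) * (c * (1/2^k) powr (2*\<gamma>))^m)"
      by (rule gauss_moment[OF P GP CP _ _ _ m0]) (use var[of "real n + real j / 2^k" "real n + real (j+1) / 2^k"] dif in auto)
    then show ?thesis by (simp add: D_def C_def)
  qed
  have E2: "(\<integral>\<^sup>+\<omega>. ennreal (b n k \<omega>) \<partial>M) \<le> ennreal (Q * q^k)" for n k
  proof -
    define r where "r = 1 / (q^k)^(2*m-1)"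
    have r0: "r \<ge> 0" using q0 by (simp add: r_def)
    have "(\<integral>\<^sup>+\<omega>. ennreal (b n k \<omega>) \<partial>M)
        = (\<integral>\<^sup>+\<omega>. ennreal (q^k) + (\<Sum>j<2^k. ennreal ((D n k j \<omega>)^(2*m))) * ennreal r \<partial>M)"
    proof (intro nn_integral_cong)
      fix \<omega>
      have "b n k \<omega> = q^k + (\<Sum>j<2^k. (D n k j \<omega>)^(2*m)) * r" by (simp add: b_def r_def)
      moreover have "(\<Sum>j<2^k. (D n k j \<omega>)^(2*m)) \<ge> 0" by (intro sum_nonneg) (simp add: power_mult)
      ultimately show "ennreal (b n k \<omega>) = ennreal (q^k) + (\<Sum>j<2^k. ennreal ((D n k j \<omega>)^(2*m))) * ennreal r"
        using q0 r0 by (simp add: ennreal_mult power_mult sum_nonneg)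
    qed
    also have "\<dots> = ennreal (q^k) + (\<Sum>j<2^k. (\<integral>\<^sup>+\<omega>. ennreal ((D n k j \<omega>)^(2*m)) \<partial>M)) * ennreal r"
      by (simp add: nn_integral_add nn_integral_multc nn_integral_sum emeasure_space_1 del: sum_ennreal)
    also have "\<dots> \<le> ennreal (q^k) + (\<Sum>j<(2::nat)^k. ennreal (C * (c * (1/2^k) powr (2*\<gamma>))^m)) * ennreal r"
      by (intro add_left_mono mult_right_mono sum_mono E1) auto
    also have "\<dots> = ennreal (q^k + 2^k * (C * (c * (1/2^k) powr (2*\<gamma>))^m) * r)"
    proof -
      have e2k: "ennreal (2^k) = 2^k" using ennreal_power[of 2 k] by simp
      show ?thesis using q0 r0 C0 c by (simp add: ennreal_mult ennreal_plus e2k)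
    qed
    also have "\<dots> \<le> ennreal (q^k + C * c^m * q^k)"
    proof (intro ennreal_leI add_left_mono)
      have "2^k * (C * (c * (1/2^k) powr (2*\<gamma>))^m) * r = 2^k * (C * (c * (1/2^k) powr (2*\<gamma>))^m) / ((1/h)^k)^(2*m-1)"
        by (simp add: r_def q_def)
      also have "\<dots> \<le> C * c^m * (1/h)^k" by (rule level_bound[OF g0 c C0 m0 mg h_def])
      finally show "2^k * (C * (c * (1/2^k) powr (2*\<gamma>))^m) * r \<le> C * c^m * q^k" by (simp add: q_def)
    qed
    also have "\<dots> = ennreal (Q * q^k)" by (simp add: Q_def algebra_simps)
    finally show ?thesis .
  qed
  have E3: "(\<integral>\<^sup>+\<omega>. ennreal \<bar>G (real n) \<omega>\<bar> \<partial>M) \<le> ennreal (1 + c * real n powr (2*\<gamma>))" for n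
  proof -
    have "(\<integral>\<^sup>+\<omega>. ennreal \<bar>G (real n) \<omega>\<bar> \<partial>M) \<le> (\<integral>\<^sup>+\<omega>. 1 + ennreal ((G (real n) \<omega> - G 0 \<omega>)^(2*1)) \<partial>M)"
    proof (rule nn_integral_mono_AE)
      show "AE \<omega> in M. ennreal \<bar>G (real n) \<omega>\<bar> \<le> 1 + ennreal ((G (real n) \<omega> - G 0 \<omega>)^(2*1))"
        using G0
      proof eventually_elim
        case (elim \<omega>)
        have "\<bar>G (real n) \<omega>\<bar> \<le> 1 + (G (real n) \<omega>)^2"
          by (rule abs_le_one_plus_sq)
        then have "ennreal \<bar>G (real n) \<omega>\<bar> \<le> ennreal (1 + (G (real n) \<omega>)^2)" by (rule ennreal_leI)
        then show ?case using elim by (simp add: ennreal_plus)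
      qed
    qed
    also have "\<dots> = 1 + (\<integral>\<^sup>+\<omega>. ennreal ((G (real n) \<omega> - G 0 \<omega>)^(2*1)) \<partial>M)"
      using Gn Gm[of 0] by (subst nn_integral_add) (auto simp: emeasure_space_1)
    also have "\<dots> \<le> 1 + ennreal (fact (2*1) / (2^1 * fact 1) * (c * \<bar>real n - 0\<bar> powr (2*\<gamma>))^1)"
      by (intro add_left_mono gauss_moment[OF P GP CP var]) auto
    also have "\<dots> = ennreal (1 + c * real n powr (2*\<gamma>))" using c by (simp add: ennreal_plus)
    finally show ?thesis .
  qed

  have Q0: "Q \<ge> 0" using C0 c by (simp add: Q_def)
  have bem[measurable]: "(\<lambda>\<omega>. ennreal (b n k \<omega>)) \<in> borel_measurable M" for n k by measurable
  have Sint: "(\<integral>\<^sup>+\<omega>. S n \<omega> \<partial>M) \<le> ennreal (Q * (1 / (1 - q)))" for n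
  proof -
    have "(\<integral>\<^sup>+\<omega>. S n \<omega> \<partial>M) = (\<Sum>k. (\<integral>\<^sup>+\<omega>. ennreal (b n k \<omega>) \<partial>M))"
      unfolding S_def by (rule nn_integral_suminf) measurable
    also have "\<dots> \<le> (\<Sum>k. ennreal (Q * q^k))"
      by (intro suminf_le summableI E2)
    also have "(\<Sum>k. ennreal (Q * q^k)) = ennreal (Q * (1 / (1 - q)))"
    proof (rule suminf_ennreal_eq)
      show "(\<lambda>k. Q * q^k) sums (Q * (1 / (1 - q)))"
        using geometric_sums[of q] q0 q1 by (intro sums_mult) auto
    qed (use Q0 q0 in auto)
    finally show ?thesis .
  qed
  define Dq where "Dq = Q * (1 / (1 - q))"
  have Dq0: "Dq \<ge> 0" using Q0 q1 by (simp add: Dq_def)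
  have e0: "e n > 0" for n by (simp add: e_def)
  have summ: "summable (\<lambda>n. e n * (1 + c * real n powr (2*\<gamma>) + Dq))"
    unfolding e_def by (rule weight_summable[OF th _ Dq0 g1 g0]) (use c in auto)
  have Wint: "(\<integral>\<^sup>+\<omega>. W \<omega> \<partial>M) \<le> ennreal (\<Sum>n. e n * (1 + c * real n powr (2*\<gamma>) + Dq))"
  proof -
    have "(\<integral>\<^sup>+\<omega>. W \<omega> \<partial>M) = (\<Sum>n. (\<integral>\<^sup>+\<omega>. ennreal (e n) * (ennreal \<bar>G (real n) \<omega>\<bar> + S n \<omega>) \<partial>M))"
      unfolding W_def by (rule nn_integral_suminf) measurable
    also have "\<dots> \<le> (\<Sum>n. ennreal (e n * (1 + c * real n powr (2*\<gamma>) + Dq)))"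
    proof (intro suminf_le summableI)
      fix n
      have "(\<integral>\<^sup>+\<omega>. ennreal (e n) * (ennreal \<bar>G (real n) \<omega>\<bar> + S n \<omega>) \<partial>M)
          = ennreal (e n) * ((\<integral>\<^sup>+\<omega>. ennreal \<bar>G (real n) \<omega>\<bar> \<partial>M) + (\<integral>\<^sup>+\<omega>. S n \<omega> \<partial>M))"
      proof -
        have m1: "(\<lambda>\<omega>. ennreal \<bar>G (real n) \<omega>\<bar> + S n \<omega>) \<in> borel_measurable M" by measurable
        show ?thesis using nn_integral_cmult[OF m1, of "ennreal (e n)"] nn_integral_add[OF Gnm Sm, of n n] by simp
      qed
      also have "\<dots> \<le> ennreal (e n) * (ennreal (1 + c * real n powr (2*\<gamma>)) + ennreal Dq)"
        unfolding Dq_def by (intro mult_left_mono add_mono E3 Sint) auto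
      also have "\<dots> = ennreal (e n * (1 + c * real n powr (2*\<gamma>) + Dq))"
        using e0[of n] c Dq0 by (simp add: ennreal_mult ennreal_plus)
      finally show "(\<integral>\<^sup>+\<omega>. ennreal (e n) * (ennreal \<bar>G (real n) \<omega>\<bar> + S n \<omega>) \<partial>M) \<le> ennreal (e n * (1 + c * real n powr (2*\<gamma>) + Dq))" .
    qed
    also have "\<dots> = ennreal (\<Sum>n. e n * (1 + c * real n powr (2*\<gamma>) + Dq))"
    proof (rule suminf_ennreal2[OF _ summ])
      fix n
      have "0 \<le> c * real n powr (2*\<gamma>)" using c by simp
      then have "0 \<le> 1 + c * real n powr (2*\<gamma>) + Dq" using Dq0 by linarith
      then show "0 \<le> e n * (1 + c * real n powr (2*\<gamma>) + Dq)" using e0[of n] by simp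
    qed
    finally show ?thesis .
  qed
  then have "(\<integral>\<^sup>+\<omega>. W \<omega> \<partial>M) \<noteq> \<infinity>" by (auto simp: top_unique)
  from nn_integral_PInf_AE[OF Wm this] have AEW: "AE \<omega> in M. W \<omega> \<noteq> \<infinity>" .

  have path: "\<exists>w. \<forall>t\<ge>0. \<bar>G t \<omega>\<bar> \<le> w * exp (\<theta>/2 * t)" if \<omega>: "\<omega> \<in> space M" and Wf: "W \<omega> \<noteq> \<infinity>" for \<omega>
  proof -
    define w where "w = enn2real (W \<omega>)"
    have Wlt: "W \<omega> < top" using Wf by (simp add: less_top)
    have Ww: "W \<omega> = ennreal w" using Wlt by (simp add: w_def)
    have termle: "ennreal (e n) * (ennreal \<bar>G (real n) \<omega>\<bar> + S n \<omega>) \<le> W \<omega>" for n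
      using sum_le_suminf[OF summableI, of "{n}" "\<lambda>n. ennreal (e n) * (ennreal \<bar>G (real n) \<omega>\<bar> + S n \<omega>)"]
      by (simp add: W_def)
    have Slt: "S n \<omega> < top" for n
    proof -
      have "ennreal (e n) * (ennreal \<bar>G (real n) \<omega>\<bar> + S n \<omega>) < top" using termle[of n] Wlt by (rule le_less_trans)
      then have "ennreal \<bar>G (real n) \<omega>\<bar> + S n \<omega> < top \<or> ennreal \<bar>G (real n) \<omega>\<bar> + S n \<omega> = 0"
        using e0[of n] by (auto simp: ennreal_mult_less_top)
      then show ?thesis by (auto simp: add_eq_0_iff_both_eq_0)
    qed
    define B where "B = (\<lambda>n. enn2real (S n \<omega>))"
    have SB: "S n \<omega> = ennreal (B n)" for n using Slt[of n] by (simp add: B_def)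
    have B0: "B n \<ge> 0" for n by (simp add: B_def)
    have Bpart: "(\<Sum>k\<le>K. b n k \<omega>) \<le> B n" for n K
    proof -
      have "ennreal (\<Sum>k\<le>K. b n k \<omega>) = (\<Sum>k\<le>K. ennreal (b n k \<omega>))" using bnn by (simp add: sum_nonneg)
      also have "\<dots> \<le> S n \<omega>" unfolding S_def by (rule sum_le_suminf[OF summableI]) auto
      finally show ?thesis using B0[of n] by (simp add: SB)
    qed
    have wb: "e n * (\<bar>G (real n) \<omega>\<bar> + B n) \<le> w" for n
    proof -
      have "ennreal (e n * (\<bar>G (real n) \<omega>\<bar> + B n)) = ennreal (e n) * (ennreal \<bar>G (real n) \<omega>\<bar> + S n \<omega>)"
        using e0[of n] B0[of n] by (simp add: ennreal_mult ennreal_plus SB)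
      also have "\<dots> \<le> ennreal w" using termle[of n] by (simp add: Ww)
      finally show ?thesis by (simp add: w_def)
    qed
    have w0: "w \<ge> 0" by (simp add: w_def)
    have inc: "\<bar>G (real n + real (j+1) / 2^k) \<omega> - G (real n + real j / 2^k) \<omega>\<bar> \<le> b n k \<omega>" if "j < 2^k" for n k j
    proof -
      have "\<bar>D n k j \<omega>\<bar> \<le> q^k + (D n k j \<omega>)^(2*m) / (q^k)^(2*m-1)"
        by (rule abs_le_pow_bound) (use q0 m0 in auto)
      also have "(D n k j \<omega>)^(2*m) \<le> (\<Sum>j<2^k. (D n k j \<omega>)^(2*m))"
        by (rule member_le_sum) (use that in \<open>auto simp: power_mult\<close>)
      then have "(D n k j \<omega>)^(2*m) / (q^k)^(2*m-1) \<le> (\<Sum>j<2^k. (D n k j \<omega>)^(2*m)) / (q^k)^(2*m-1)"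
        by (rule divide_right_mono) (use q0 in simp)
      finally show ?thesis by (simp add: b_def D_def)
    qed
    have gc: "continuous_on {0..} (\<lambda>t. G t \<omega>)"
    proof (rule holder_cont[of "\<gamma>/2"])
      fix T :: real assume "T > 0"
      from Hol[OF \<omega> _ _ this, of "\<gamma>/2"] g0
      show "\<exists>K. \<forall>s\<in>{0..T}. \<forall>t\<in>{0..T}. \<bar>G t \<omega> - G s \<omega>\<bar> \<le> K * \<bar>t - s\<bar> powr (\<gamma>/2)" by simp
    qed (use g0 in simp)
    have "\<bar>G t \<omega>\<bar> \<le> w * exp (\<theta>/2 * t)" if t: "t \<ge> 0" for t
    proof -
      define n where "n = nat \<lfloor>t\<rfloor>"
      have rn: "real n = of_int \<lfloor>t\<rfloor>" using t by (simp add: n_def)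
      have tin: "t \<in> {real n..real n + 1}" unfolding rn atLeastAtMost_iff by linarith
      have gcn: "continuous_on {real n..real n + 1} (\<lambda>t. G t \<omega>)" by (rule continuous_on_subset[OF gc]) auto
      have "\<bar>G t \<omega> - G (real n) \<omega>\<bar> \<le> B n"
        by (rule chain_cont[where b = "\<lambda>k. b n k \<omega>", OF inc bnn Bpart gcn tin])
      then have "\<bar>G t \<omega>\<bar> \<le> \<bar>G (real n) \<omega>\<bar> + B n" by linarith
      also have "\<dots> \<le> w / e n" using wb[of n] e0[of n] by (simp add: field_simps)
      also have "\<dots> = w * exp (\<theta>/2 * real n)" by (simp add: e_def exp_minus field_simps)
      also have "\<dots> \<le> w * exp (\<theta>/2 * t)" using w0 th tin by (intro mult_left_mono) auto
      finally show ?thesis .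
    qed
    then show ?thesis by blast
  qed
  show ?thesis using AEW AE_space
  proof eventually_elim
    case (elim \<omega>)
    then obtain w where wb: "\<forall>t\<ge>0. \<bar>G t \<omega>\<bar> \<le> w * exp (\<theta>/2 * t)" using path by blast
    have gc: "continuous_on {0..} (\<lambda>t. G t \<omega>)"
    proof (rule holder_cont[of "\<gamma>/2"])
      fix T :: real assume "T > 0"
      from Hol[OF elim(2) _ _ this, of "\<gamma>/2"] g0
      show "\<exists>K. \<forall>s\<in>{0..T}. \<forall>t\<in>{0..T}. \<bar>G t \<omega> - G s \<omega>\<bar> \<le> K * \<bar>t - s\<bar> powr (\<gamma>/2)" by simp
    qed (use g0 in simp)
    have "\<And>t. t \<ge> 0 \<Longrightarrow> (\<lambda>t. X t \<omega>) t = \<mu> * \<theta> * t + \<theta> * integral {0..t} (\<lambda>t. X t \<omega>) + (\<lambda>t. G t \<omega>) t"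
      using Xe[OF elim(2)] by simp
    from det_main[OF th gc _ Xc[OF elim(2)] this, of w] wb
    show ?case by (simp add: zeta_inf_def)
  qed
qed


end
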